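(* Let $F$ be a graph of diameter $2$, $n=|V(F)|$, $t=\delta(F)$, and let $l>n$ be an integer. Then $\delta_l\le n!\,C_{l-2}^{n-t-2}$.
   Context: All graphs are simple, finite, undirected. The $F$-degree of a vertex $v$ in $G$ is the number of subgraphs of $G$ (not necessarily induced) isomorphic to $F$ and containing $v$. $A_{2l-1}$ is the graph with vertex set $\{1,\dots,2l-1\}$ in which distinct $i,j$ are adjacent iff $|i-j|\le l-1$; $F_{2l}$ is obtained from $A_{2l-1}$ by adding a new vertex $2l$ joined exactly to $1,\dots,t$. $z_i$ is the $F$-degree of $i$ in $A_{2l-1}$, $f_i$ the $F$-degree of $i$ in $F_{2l}$, and $\delta_i=f_i-z_i$. $C_m^k=\frac{m!}{k!(m-k)!}$ for integers $m\ge k\ge 0$, and $C_m^k=0$ otherwise. *)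

theory Defs
  imports Main
begin

definition simple_graph :: "'a set \<Rightarrow> 'a set set \<Rightarrow> bool" where
  "simple_graph V E \<longleftrightarrow> finite V \<and>
     (\<forall>e\<in>E. \<exists>x y. x \<noteq> y \<and> e = {x, y} \<and> x \<in> V \<and> y \<in> V)"

definition degree :: "'a set set \<Rightarrow> 'a \<Rightarrow> nat" where
  "degree E v = card {u. {v, u} \<in> E}"

definition min_degree :: "'a set \<Rightarrow> 'a set set \<Rightarrow> nat" where
  "min_degree V E = Min (degree E ` V)"

fun walk :: "'a set set \<Rightarrow> 'a list \<Rightarrow> bool" where
  "walk E [] = True"
| "walk E [x] = True"
| "walk E (x # y # xs) = ({x, y} \<in> E \<and> walk E (y # xs))"

definition dist_le :: "'a set \<Rightarrow> 'a set set \<Rightarrow> 'a \<Rightarrow> 'a \<Rightarrow> nat \<Rightarrow> bool" where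
  "dist_le V E u v k \<longleftrightarrow> (\<exists>xs. xs \<noteq> [] \<and> hd xs = u \<and> last xs = v \<and> set xs \<subseteq> V
       \<and> walk E xs \<and> length xs \<le> k + 1)"

definition has_diameter :: "'a set \<Rightarrow> 'a set set \<Rightarrow> nat \<Rightarrow> bool" where
  "has_diameter V E d \<longleftrightarrow> (\<forall>u\<in>V. \<forall>v\<in>V. dist_le V E u v d) \<and>
       (\<exists>u\<in>V. \<exists>v\<in>V. \<not> dist_le V E u v (d - 1))"

definition graph_iso :: "'b set \<Rightarrow> 'b set set \<Rightarrow> 'a set \<Rightarrow> 'a set set \<Rightarrow> bool" where
  "graph_iso V1 E1 V2 E2 \<longleftrightarrow> (\<exists>f. bij_betw f V1 V2 \<and>
      (\<forall>x\<in>V1. \<forall>y\<in>V1. {x, y} \<in> E1 \<longleftrightarrow> {f x, f y} \<in> E2))"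

text \<open>F-degree of v in G: number of (not necessarily induced) subgraphs of G
  isomorphic to F that contain v.\<close>
definition F_degree :: "'b set \<Rightarrow> 'b set set \<Rightarrow> 'a set \<Rightarrow> 'a set set \<Rightarrow> 'a \<Rightarrow> nat" where
  "F_degree VF EF V E v = card {(W, D). W \<subseteq> V \<and> D \<subseteq> E \<and> (\<forall>e\<in>D. e \<subseteq> W) \<and> v \<in> W
      \<and> graph_iso VF EF W D}"

text \<open>A_{2l-1}: vertices 1..2l-1, i~j iff 0<|i-j|<=l-1\<close>
definition A_V :: "nat \<Rightarrow> nat set" where
  "A_V l = {1..2*l-1}"

definition A_E :: "nat \<Rightarrow> nat set set" where
  "A_E l = {{i, j} | i j. i \<in> A_V l \<and> j \<in> A_V l \<and> i \<noteq> j \<and> i - j \<le> l - 1 \<and> j - i \<le> l - 1}"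

text \<open>F_{2l}: add vertex 2l joined exactly to 1..t\<close>
definition FF_V :: "nat \<Rightarrow> nat set" where
  "FF_V l = {1..2*l}"

definition FF_E :: "nat \<Rightarrow> nat \<Rightarrow> nat set set" where
  "FF_E l t = A_E l \<union> {{2*l, i} | i. 1 \<le> i \<and> i \<le> t}"

text \<open>C_m^k, zero outside 0<=k<=m\<close>
definition Cb :: "int \<Rightarrow> int \<Rightarrow> int" where
  "Cb m k = (if 0 \<le> k \<and> k \<le> m then int (nat m choose nat k) else 0)"

end

theory Submission
  imports Defs "HOL-Combinatorics.Permutations"
begin

definition img_of :: "'b set set \<Rightarrow> 'b set \<Rightarrow> ('b \<Rightarrow> 'a) \<Rightarrow> 'a set set" where
  "img_of EF VF f = {{f x, f y} | x y. x \<in> VF \<and> y \<in> VF \<and> {x, y} \<in> EF}"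

definition Dset :: "'b set \<Rightarrow> 'b set set \<Rightarrow> 'a set \<Rightarrow> 'a set set set" where
  "Dset VF EF W = {D. \<exists>f. bij_betw f VF W \<and> D = img_of EF VF f}"

lemma Dset_card:
  assumes fin: "finite VF" and cw: "card W = card VF" and fW: "finite W"
  shows "finite (Dset VF EF W) \<and> card (Dset VF EF W) \<le> fact (card VF)"
proof -
  obtain g where g: "bij_betw g VF W"
    using finite_same_card_bij[OF fin fW] cw by metis
  have sub: "Dset VF EF W \<subseteq> (\<lambda>p. img_of EF VF (g \<circ> p)) ` {p. p permutes VF}"
  proof
    fix D assume "D \<in> Dset VF EF W"
    then obtain f where f: "bij_betw f VF W" and D: "D = img_of EF VF f"
      unfolding Dset_def by blast
    define p where "p = (\<lambda>x. if x \<in> VF then inv_into VF g (f x) else x)"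
    have bi: "bij_betw (inv_into VF g) W VF" using g by (rule bij_betw_inv_into)
    have "bij_betw (inv_into VF g \<circ> f) VF VF" using bij_betw_trans[OF f bi] .
    then have "bij_betw p VF VF"
      by (rule bij_betw_cong[THEN iffD1, rotated]) (simp add: p_def)
    then have pp: "p permutes VF"
      by (rule bij_imp_permutes) (simp add: p_def)
    have gp: "g (p x) = f x" if "x \<in> VF" for x
    proof -
      have "f x \<in> W" using f that by (auto simp: bij_betw_def)
      then have "f x \<in> g ` VF" using g by (simp add: bij_betw_def)
      then show ?thesis using that by (simp add: p_def f_inv_into_f)
    qed
    have "img_of EF VF (g \<circ> p) = img_of EF VF f"
      unfolding img_of_def using gp by (auto; metis)
    then show "D \<in> (\<lambda>p. img_of EF VF (g \<circ> p)) ` {p. p permutes VF}"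
      using pp D by blast
  qed
  have fp: "finite {p. p permutes VF}" using fin by (rule finite_permutations)
  have "card (Dset VF EF W) \<le> card ((\<lambda>p. img_of EF VF (g \<circ> p)) ` {p. p permutes VF})"
    by (rule card_mono[OF _ sub]) (use fp in auto)
  also have "\<dots> \<le> card {p. p permutes VF}" by (rule card_image_le[OF fp])
  also have "\<dots> = fact (card VF)" using card_permutations[OF refl fin] .
  finally show ?thesis using finite_subset[OF sub] fp by auto
qed


lemma FF_E_2l:
  assumes "{2*l, w} \<in> FF_E l t" "t < l"
  shows "w \<in> {1..t}"
  using assms unfolding FF_E_def A_E_def A_V_def
  by (auto simp: doubleton_eq_iff)

lemma FF_E_A:
  assumes "{u, w} \<in> FF_E l t" "u \<noteq> 2*l" "w \<noteq> 2*l"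
  shows "w - u \<le> l - 1"
  using assms unfolding FF_E_def A_E_def
  by (auto simp: doubleton_eq_iff)

lemma FF_E_pair:
  assumes "e \<in> FF_E l t"
  shows "\<exists>u v. e = {u, v}"
  using assms unfolding FF_E_def A_E_def by auto


lemma structure_T:
  fixes VF :: "'b set" and EF :: "'b set set" and l n t :: nat
  assumes sg: "simple_graph VF EF"
    and dia: "has_diameter VF EF 2"
    and nn: "n = card VF"
    and tt: "t = min_degree VF EF"
    and ln: "l > n"
    and W: "W \<subseteq> FF_V l" and DE: "D \<subseteq> FF_E l t" and DW: "\<forall>e\<in>D. e \<subseteq> W"
    and lW: "l \<in> W" and iso: "graph_iso VF EF W D" and l2W: "2*l \<in> W"
  shows "1 \<le> t \<and> t + 2 \<le> n \<and> {2*l, l} \<union> {1..t} \<subseteq> W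
     \<and> W - ({2*l, l} \<union> {1..t}) \<subseteq> {t+1..t+l-1} - {l}
     \<and> card (W - ({2*l, l} \<union> {1..t})) = n - t - 2
     \<and> D \<in> Dset VF EF W"
proof -
  have finV: "finite VF" using sg by (simp add: simple_graph_def)
  have EFV: "\<And>x y. {x, y} \<in> EF \<Longrightarrow> y \<in> VF"
    using sg unfolding simple_graph_def by (metis doubleton_eq_iff)
  obtain f where f: "bij_betw f VF W" and fE: "\<forall>x\<in>VF. \<forall>y\<in>VF. {x, y} \<in> EF \<longleftrightarrow> {f x, f y} \<in> D"
    using iso unfolding graph_iso_def by blast
  have fW: "f ` VF = W" using f by (simp add: bij_betw_def)
  have injf: "inj_on f VF" using f by (simp add: bij_betw_def)
  obtain a where aV: "a \<in> VF" and fa: "f a = 2*l" using l2W fW by (metis imageE)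
  define N where "N = {u. {a, u} \<in> EF}"
  have NV: "N \<subseteq> VF" using EFV by (auto simp: N_def)
  have "t \<le> degree EF a"
    unfolding tt min_degree_def using finV aV by (intro Min_le) auto
  then have tN: "t \<le> card N" by (simp add: degree_def N_def)
  have tl: "t < l" using card_mono[OF finV NV] tN nn ln by simp
  have fN: "f ` N \<subseteq> {1..t}"
  proof
    fix w assume "w \<in> f ` N"
    then obtain u where u: "u \<in> N" "w = f u" by blast
    then have "{f a, f u} \<in> D" using fE aV NV by (auto simp: N_def)
    then show "w \<in> {1..t}" using DE fa u tl FF_E_2l by auto
  qed
  have cfN: "card (f ` N) = card N"
    using inj_on_subset[OF injf NV] by (rule card_image)
  have oneW: "{1..t} \<subseteq> W"
  proof -
    have "f ` N = {1..t}"
      by (rule card_seteq) (use fN cfN tN in auto)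
    then show ?thesis using NV fW by auto
  qed
  have far: "w \<le> t + l - 1" if wW: "w \<in> W" and w2: "w \<noteq> 2*l" and wt: "w \<notin> {1..t}" for w
  proof -
    obtain b where bV: "b \<in> VF" and fb: "f b = w" using wW fW by (metis imageE)
    obtain xs where xs: "xs \<noteq> []" "hd xs = a" "last xs = b" "set xs \<subseteq> VF"
       "walk EF xs" "length xs \<le> 3"
    proof -
      have "dist_le VF EF a b 2" using dia aV bV unfolding has_diameter_def by blast
      then show ?thesis using that unfolding dist_le_def by (metis numeral_3_eq_3 Suc_eq_plus1 numeral_2_eq_2)
    qed
    show ?thesis
    proof (cases xs)
      case Nil then show ?thesis using xs by simp
    next
      case (Cons p ys)
      show ?thesis
      proof (cases ys)
        case Nil
        then show ?thesis using xs Cons fb fa w2 by simp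
      next
        case (Cons q zs)
        show ?thesis
        proof (cases zs)
          case Nil
          then have "{a, b} \<in> EF" using xs \<open>xs = p # ys\<close> Cons by simp
          then have "{f a, f b} \<in> D" using fE aV bV by auto
          then have "w \<in> {1..t}" using DE fa fb tl FF_E_2l by auto
          then show ?thesis using wt by simp
        next
          case (Cons r us)
          then have us: "us = []" using xs \<open>xs = p # ys\<close> \<open>ys = q # zs\<close> by simp
          have e1: "{a, q} \<in> EF" and e2: "{q, b} \<in> EF" and qV: "q \<in> VF"
            using xs \<open>xs = p # ys\<close> \<open>ys = q # zs\<close> Cons us by auto
          have "{f a, f q} \<in> D" using fE aV qV e1 by auto
          then have fq: "f q \<in> {1..t}" using DE fa tl FF_E_2l by auto
          have "{f q, f b} \<in> D" using fE bV qV e2 by auto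
          then have "w - f q \<le> l - 1" using DE fb FF_E_A[of "f q" w l t] fq tl w2 by auto
          then show ?thesis using fq tl by auto
        qed
      qed
    qed
  qed
  have t1: "1 \<le> t" using far[OF lW] tl ln by force
  define B where "B = {2*l, l} \<union> {1..t}"
  have BW: "B \<subseteq> W" using oneW lW l2W by (auto simp: B_def)
  have cB: "card B = t + 2" using tl by (auto simp: B_def)
  have cW: "card W = n" using bij_betw_same_card[OF f] nn by simp
  have finW: "finite W" using W by (rule finite_subset) (simp add: FF_V_def)
  have tn: "t + 2 \<le> n" using card_mono[OF finW BW] cB cW by simp
  have cWB: "card (W - B) = n - t - 2" using card_Diff_subset[OF finite_subset[OF BW finW] BW] cB cW by simp
  have WBS: "W - B \<subseteq> {t+1..t+l-1} - {l}"
  proof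
    fix w assume w: "w \<in> W - B"
    then have "w \<in> {1..2*l}" using W by (auto simp: FF_V_def)
    then show "w \<in> {t+1..t+l-1} - {l}" using w far[of w] by (auto simp: B_def)
  qed
  have DD: "D = img_of EF VF f"
  proof
    show "D \<subseteq> img_of EF VF f"
    proof
      fix e assume eD: "e \<in> D"
      then obtain u v where e: "e = {u, v}" using DE FF_E_pair by blast
      then have "u \<in> W" "v \<in> W" using DW eD by auto
      then obtain x y where "x \<in> VF" "y \<in> VF" "u = f x" "v = f y" using fW by blast
      then show "e \<in> img_of EF VF f" using fE eD e unfolding img_of_def by blast
    qed
  next
    show "img_of EF VF f \<subseteq> D" using fE unfolding img_of_def by blast
  qed
  show ?thesis using t1 tn BW WBS cWB DD f unfolding B_def Dset_def by blast
qed


lemma finite_FF_E: "finite (FF_E l t)"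
proof -
  have "A_E l \<subseteq> Pow (A_V l)" unfolding A_E_def by auto
  then have "finite (A_E l)" by (rule finite_subset) (simp add: A_V_def)
  moreover have "{{2*l, i} | i. 1 \<le> i \<and> i \<le> t} = (\<lambda>i. {2*l, i}) ` {1..t}" by auto
  ultimately show ?thesis unfolding FF_E_def by simp
qed

theorem lemma7:
  fixes VF :: "'b set" and EF :: "'b set set" and l n t :: nat
  assumes "simple_graph VF EF"
    and "has_diameter VF EF 2"
    and "n = card VF"
    and "t = min_degree VF EF"
    and "l > n"
  shows "int (F_degree VF EF (FF_V l) (FF_E l t) l) - int (F_degree VF EF (A_V l) (A_E l) l)
           \<le> int (fact n) * Cb (int l - 2) (int n - int t - 2)"
proof -
  define SF where "SF = {(W, D). W \<subseteq> FF_V l \<and> D \<subseteq> FF_E l t \<and> (\<forall>e\<in>D. e \<subseteq> W) \<and> l \<in> W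
      \<and> graph_iso VF EF W D}"
  define SA where "SA = {(W, D). W \<subseteq> A_V l \<and> D \<subseteq> A_E l \<and> (\<forall>e\<in>D. e \<subseteq> W) \<and> l \<in> W
      \<and> graph_iso VF EF W D}"
  define T where "T = {(W, D). W \<subseteq> FF_V l \<and> D \<subseteq> FF_E l t \<and> (\<forall>e\<in>D. e \<subseteq> W) \<and> l \<in> W
      \<and> graph_iso VF EF W D \<and> 2*l \<in> W}"
  have finV: "finite VF" using assms(1) by (simp add: simple_graph_def)
  have sub: "SF \<subseteq> SA \<union> T"
  proof
    fix x assume "x \<in> SF"
    then obtain W D where x: "x = (W, D)" and W: "W \<subseteq> FF_V l" and DE: "D \<subseteq> FF_E l t"
      and DW: "\<forall>e\<in>D. e \<subseteq> W" and rest: "l \<in> W" "graph_iso VF EF W D"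
      unfolding SF_def by blast
    show "x \<in> SA \<union> T"
    proof (cases "2*l \<in> W")
      case True then show ?thesis using x W DE DW rest unfolding T_def by blast
    next
      case False
      have "W \<subseteq> A_V l"
      proof
        fix w assume "w \<in> W"
        then have "w \<in> {1..2*l}" "w \<noteq> 2*l" using W False by (auto simp: FF_V_def)
        then show "w \<in> A_V l" by (auto simp: A_V_def)
      qed
      moreover have "D \<subseteq> A_E l"
      proof
        fix e assume eD: "e \<in> D"
        then have "e \<in> FF_E l t" using DE by blast
        moreover have "2*l \<notin> e" using DW eD False by blast
        ultimately show "e \<in> A_E l" unfolding FF_E_def by auto
      qed
      ultimately show ?thesis using x DW rest unfolding SA_def by blast
    qed
  qed
  have finAT: "finite (SA \<union> T)"
  proof (rule finite_subset)
    have "A_V l \<subseteq> FF_V l" by (auto simp: A_V_def FF_V_def)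
    moreover have "A_E l \<subseteq> FF_E l t" by (auto simp: FF_E_def)
    ultimately show "SA \<union> T \<subseteq> Pow (FF_V l) \<times> Pow (FF_E l t)"
      unfolding SA_def T_def by blast
    show "finite (Pow (FF_V l) \<times> Pow (FF_E l t))"
      using finite_FF_E by (simp add: FF_V_def)
  qed
  have "card SF \<le> card (SA \<union> T)" by (rule card_mono[OF finAT sub])
  also have "\<dots> \<le> card SA + card T" by (rule card_Un_le)
  finally have c1: "card SF \<le> card SA + card T" .
  have Fd: "F_degree VF EF (FF_V l) (FF_E l t) l = card SF" "F_degree VF EF (A_V l) (A_E l) l = card SA"
    unfolding F_degree_def SF_def SA_def by simp_all
  have Cbnn: "0 \<le> Cb (int l - 2) (int n - int t - 2)" by (simp add: Cb_def)
  have cT: "int (card T) \<le> int (fact n) * Cb (int l - 2) (int n - int t - 2)"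
  proof (cases "T = {}")
    case True then show ?thesis using Cbnn by simp
  next
    case False
    then obtain W0 D0 where "(W0, D0) \<in> T" by auto
    then have st: "1 \<le> t \<and> t + 2 \<le> n"
      using structure_T[OF assms, of W0 D0] unfolding T_def by blast
    define B where "B = {2*l, l} \<union> {1..t}"
    define S where "S = {t+1..t+l-1} - {l}"
    define Xs where "Xs = {X. X \<subseteq> S \<and> card X = n - t - 2}"
    have finS: "finite S" by (simp add: S_def)
    have lin: "l \<in> {t+1..t+l-1}" using st assms(5) by auto
    have cS: "card S = l - 2" unfolding S_def using card_Diff_singleton[OF lin] st assms(5) by simp
    have cXs: "card Xs = (l - 2) choose (n - t - 2)" unfolding Xs_def using n_subsets[OF finS] cS by simp
    have finXs: "finite Xs" unfolding Xs_def using finS by simp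
    have Tsub: "T \<subseteq> (\<lambda>(X, D). (B \<union> X, D)) ` (SIGMA X:Xs. Dset VF EF (B \<union> X))"
    proof
      fix x assume "x \<in> T"
      then obtain W D where x: "x = (W, D)" and "(W, D) \<in> T" by (metis prod.collapse)
      then have s: "{2*l, l} \<union> {1..t} \<subseteq> W
     \<and> W - ({2*l, l} \<union> {1..t}) \<subseteq> {t+1..t+l-1} - {l}
     \<and> card (W - ({2*l, l} \<union> {1..t})) = n - t - 2
     \<and> D \<in> Dset VF EF W"
        using structure_T[OF assms, of W D] unfolding T_def by blast
      then have "W = B \<union> (W - B)" unfolding B_def by blast
      moreover have "W - B \<in> Xs" using s unfolding Xs_def S_def B_def by blast
      ultimately show "x \<in> (\<lambda>(X, D). (B \<union> X, D)) ` (SIGMA X:Xs. Dset VF EF (B \<union> X))"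
        using s x by (intro image_eqI[of _ _ "(W - B, D)"]) auto
    qed
    have Dc: "finite (Dset VF EF (B \<union> X)) \<and> card (Dset VF EF (B \<union> X)) \<le> fact n" if "X \<in> Xs" for X
    proof -
      have XS: "X \<subseteq> S" "card X = n - t - 2" using that by (auto simp: Xs_def)
      have finX: "finite X" using XS finS finite_subset by blast
      have "B \<inter> X = {}" using XS(1) st assms(5) unfolding B_def S_def by fastforce
      moreover have "card B = t + 2" using st assms(5) by (auto simp: B_def)
      moreover have "finite B" by (simp add: B_def)
      ultimately have "card (B \<union> X) = n" using XS finX st card_Un_disjoint[of B X] by auto
      moreover have "finite (B \<union> X)" using finX by (simp add: B_def)
      ultimately show ?thesis using Dset_card[OF finV, of "B \<union> X" EF] assms(3) by simp
    qed
    have finSig: "finite (SIGMA X:Xs. Dset VF EF (B \<union> X))"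
      using finXs Dc by (intro finite_SigmaI) auto
    have "card T \<le> card ((\<lambda>(X, D). (B \<union> X, D)) ` (SIGMA X:Xs. Dset VF EF (B \<union> X)))"
      by (rule card_mono[OF _ Tsub]) (use finSig in simp)
    also have "\<dots> \<le> card (SIGMA X:Xs. Dset VF EF (B \<union> X))" by (rule card_image_le[OF finSig])
    also have "\<dots> = (\<Sum>X\<in>Xs. card (Dset VF EF (B \<union> X)))"
      using finXs Dc by (intro card_SigmaI) auto
    also have "\<dots> \<le> (\<Sum>X\<in>Xs. fact n)" using Dc by (intro sum_mono) auto
    also have "\<dots> = card Xs * fact n" by simp
    finally have "card T \<le> ((l - 2) choose (n - t - 2)) * fact n" using cXs by simp
    moreover have "Cb (int l - 2) (int n - int t - 2) = int ((l - 2) choose (n - t - 2))"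
      using st assms(5) unfolding Cb_def by (simp add: nat_diff_distrib)
    moreover have "int (card T) \<le> int (fact n * ((l - 2) choose (n - t - 2)))"
      using calculation(1) by (simp only: of_nat_le_iff mult.commute)
    ultimately show ?thesis by (simp only: of_nat_mult)
  qed
  show ?thesis using c1 cT Fd by simp
qed

end
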